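(* Let $1\le k<d$, $0\le\ell<d$ and $t\ge0$ be integers. If $\ell\ge\min\{k,t\}$, then $\mathrm{Pol}^\ell_t(\mathcal{G}_{k,d})=\mathrm{Pol}_t(\mathcal{G}_{k,d})$.
   Context: $\mathscr{H}_d$ denotes the real symmetric $d\times d$ matrices with $\langle A,B\rangle=\operatorname{trace}(AB)$. $\mathcal{G}_{k,d}=\{P\in\mathscr{H}_d:P^2=P,\ \operatorname{trace}(P)=k\}$. $\mathrm{Pol}^\ell_t(\mathcal{G}_{k,d})$ is the linear span of the functions $P\mapsto\langle M,P\rangle^s$ on $\mathcal{G}_{k,d}$, with $M\in\mathscr{H}_d$ of rank at most $\ell$ and $0\le s\le t$. $\mathrm{Pol}_t(\mathcal{G}_{k,d})$ is the space of restrictions to $\mathcal{G}_{k,d}$ of polynomials of degree at most $t$ on $\mathscr{H}_d$ (in the matrix entries). *)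

theory Defs
  imports "HOL-Analysis.Analysis"
begin

text \<open>Real symmetric d x d matrices, with d = CARD('n).\<close>
definition sym_mat :: "real^'n^'n \<Rightarrow> bool" where
  "sym_mat A \<longleftrightarrow> transpose A = A"

definition mat_inner :: "real^'n^'n \<Rightarrow> real^'n^'n \<Rightarrow> real" where
  "mat_inner A B = trace (A ** B)"

text \<open>The Grassmannian G_{k,d} of rank-k orthogonal projections.\<close>
definition grass :: "nat \<Rightarrow> (real^'n^'n) set" where
  "grass k = {P. sym_mat P \<and> P ** P = P \<and> trace P = real k}"

text \<open>Functions are identified when they agree on G_{k,d}.\<close>
definition PolRank :: "nat \<Rightarrow> nat \<Rightarrow> nat \<Rightarrow> (real^'n^'n \<Rightarrow> real) set" where
  "PolRank l t k = {f. \<exists>(n::nat) (c::nat \<Rightarrow> real) (M::nat \<Rightarrow> real^'n^'n) (s::nat \<Rightarrow> nat).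
      (\<forall>i<n. sym_mat (M i) \<and> rank (M i) \<le> l \<and> s i \<le> t) \<and>
      (\<forall>P\<in>grass k. f P = (\<Sum>i<n. c i * (mat_inner (M i) P) ^ s i))}"

definition PolDeg :: "nat \<Rightarrow> nat \<Rightarrow> (real^'n^'n \<Rightarrow> real) set" where
  "PolDeg t k = {f. \<exists>(n::nat) (c::nat \<Rightarrow> real) (m::nat \<Rightarrow> nat) (a::nat \<Rightarrow> nat \<Rightarrow> 'n) (b::nat \<Rightarrow> nat \<Rightarrow> 'n).
      (\<forall>i<n. m i \<le> t) \<and>
      (\<forall>P\<in>grass k. f P = (\<Sum>i<n. c i * (\<Prod>j<m i. P $ a i j $ b i j)))}"

end

theory Submission
  imports Defs "HOL-Analysis.Analysis"
begin


lemma sum_concat_if: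
  fixes n1 n2 :: nat shows "(\<Sum>i<n1+n2. (if i < n1 then f i else g (i - n1))) = (\<Sum>i<n1. f i) + (\<Sum>i<n2. (g i :: real))"
  by (induct n2) auto

lemma PolRank_0: "(\<lambda>_. 0) \<in> PolRank l t k"
  unfolding PolRank_def by (rule CollectI, rule exI[of _ 0]) auto

lemma PolRank_cong: "f \<in> PolRank l t k \<Longrightarrow> (\<And>P. P \<in> grass k \<Longrightarrow> g P = f P) \<Longrightarrow> g \<in> PolRank l t k"
  unfolding PolRank_def by auto

lemma PolRank_basic: "sym_mat M \<Longrightarrow> rank M \<le> l \<Longrightarrow> s \<le> t \<Longrightarrow> (\<lambda>P. mat_inner M P ^ s) \<in> PolRank l t k"
  unfolding PolRank_def
  by (rule CollectI, rule exI[of _ 1], rule exI[of _ "\<lambda>_. 1"], rule exI[of _ "\<lambda>_. M"], rule exI[of _ "\<lambda>_. s"]) auto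

lemma PolRank_scale: fixes f :: "real^'n^'n \<Rightarrow> real" shows "f \<in> PolRank l t k \<Longrightarrow> (\<lambda>P. c * f P) \<in> PolRank l t k"
proof -
  assume "f \<in> PolRank l t k"
  then obtain n cc s and M :: "nat \<Rightarrow> real^'n^'n" where h: "\<forall>i<n. sym_mat (M i) \<and> rank (M i) \<le> l \<and> s i \<le> t"
     "\<forall>P\<in>grass k. f P = (\<Sum>i<n. cc i * (mat_inner (M i) P) ^ s i)" unfolding PolRank_def by blast
  show ?thesis unfolding PolRank_def
    apply (rule CollectI, rule exI[of _ n], rule exI[of _ "\<lambda>i. c * cc i"], rule exI[of _ M], rule exI[of _ s])
    using h by (auto simp: sum_distrib_left mult.assoc)
qed

lemma PolRank_add: fixes f :: "real^'n^'n \<Rightarrow> real" shows "f \<in> PolRank l t k \<Longrightarrow> g \<in> PolRank l t k \<Longrightarrow> (\<lambda>P. f P + g P) \<in> PolRank l t k"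
proof -
  assume "f \<in> PolRank l t k" "g \<in> PolRank l t k"
  then obtain n1 c1 s1 n2 c2 s2 and M1 M2 :: "nat \<Rightarrow> real^'n^'n" where h1: "\<forall>i<n1. sym_mat (M1 i) \<and> rank (M1 i) \<le> l \<and> s1 i \<le> t"
     "\<forall>P\<in>grass k. f P = (\<Sum>i<n1. c1 i * (mat_inner (M1 i) P) ^ s1 i)"
    and h2: "\<forall>i<n2. sym_mat (M2 i) \<and> rank (M2 i) \<le> l \<and> s2 i \<le> t"
     "\<forall>P\<in>grass k. g P = (\<Sum>i<n2. c2 i * (mat_inner (M2 i) P) ^ s2 i)" unfolding PolRank_def by blast
  show ?thesis unfolding PolRank_def
    apply (rule CollectI, rule exI[of _ "n1+n2"], rule exI[of _ "\<lambda>i. if i < n1 then c1 i else c2 (i - n1)"],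
        rule exI[of _ "\<lambda>i. if i < n1 then M1 i else M2 (i - n1)"], rule exI[of _ "\<lambda>i. if i < n1 then s1 i else s2 (i - n1)"])
    apply (rule conjI)
    subgoal using h1 h2 by auto
  proof (intro ballI)
    fix P :: "real^'n^'n" assume P: "P \<in> grass k"
    have "(\<Sum>i<n1 + n2. (if i < n1 then c1 i else c2 (i - n1)) *
           mat_inner (if i < n1 then M1 i else M2 (i - n1)) P ^ (if i < n1 then s1 i else s2 (i - n1)))
        = (\<Sum>i<n1 + n2. (if i < n1 then c1 i * mat_inner (M1 i) P ^ s1 i else c2 (i - n1) * mat_inner (M2 (i-n1)) P ^ s2 (i-n1)))"
      by (rule sum.cong) auto
    also have "\<dots> = f P + g P" using sum_concat_if h1 h2 P by simp
    finally show "f P + g P = (\<Sum>i<n1 + n2. (if i < n1 then c1 i else c2 (i - n1)) *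
           mat_inner (if i < n1 then M1 i else M2 (i - n1)) P ^ (if i < n1 then s1 i else s2 (i - n1)))" by simp
  qed
qed

lemma PolRank_sum: "finite A \<Longrightarrow> (\<And>x. x \<in> A \<Longrightarrow> f x \<in> PolRank l t k) \<Longrightarrow> (\<lambda>P. \<Sum>x\<in>A. f x P) \<in> PolRank l t k"
proof (induction A rule: finite_induct)
  case empty then show ?case using PolRank_0 by simp
next
  case (insert x F) then show ?case using PolRank_add[of "f x" l t k "\<lambda>P. \<Sum>x\<in>F. f x P"] by simp
qed

lemma PolDeg_0: "(\<lambda>_. 0) \<in> PolDeg t k"
  unfolding PolDeg_def by (rule CollectI, rule exI[of _ 0]) auto

lemma PolDeg_cong: "f \<in> PolDeg t k \<Longrightarrow> (\<And>P. P \<in> grass k \<Longrightarrow> g P = f P) \<Longrightarrow> g \<in> PolDeg t k"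
  unfolding PolDeg_def by auto

lemma PolDeg_basic: "m \<le> t \<Longrightarrow> (\<lambda>P. \<Prod>j<m. P $ a j $ b j) \<in> PolDeg t k"
  unfolding PolDeg_def
  by (rule CollectI, rule exI[of _ 1], rule exI[of _ "\<lambda>_. 1"], rule exI[of _ "\<lambda>_. m"], rule exI[of _ "\<lambda>_. a"],
      rule exI[of _ "\<lambda>_. b"]) auto

lemma PolDeg_scale: fixes f :: "real^'n^'n \<Rightarrow> real" shows "f \<in> PolDeg t k \<Longrightarrow> (\<lambda>P. c * f P) \<in> PolDeg t k"
proof -
  assume "f \<in> PolDeg t k"
  then obtain n cc m and a b :: "nat \<Rightarrow> nat \<Rightarrow> 'n" where h: "\<forall>i<n. m i \<le> t"
     "\<forall>P\<in>grass k. f P = (\<Sum>i<n. cc i * (\<Prod>j<m i. P $ a i j $ b i j))" unfolding PolDeg_def by blast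
  show ?thesis unfolding PolDeg_def
    apply (rule CollectI, rule exI[of _ n], rule exI[of _ "\<lambda>i. c * cc i"], rule exI[of _ m], rule exI[of _ a], rule exI[of _ b])
    using h by (auto simp: sum_distrib_left mult.assoc)
qed

lemma PolDeg_add: fixes f :: "real^'n^'n \<Rightarrow> real" shows "f \<in> PolDeg t k \<Longrightarrow> g \<in> PolDeg t k \<Longrightarrow> (\<lambda>P. f P + g P) \<in> PolDeg t k"
proof -
  assume "f \<in> PolDeg t k" "g \<in> PolDeg t k"
  then obtain n1 c1 m1 n2 c2 m2 and a1 b1 a2 b2 :: "nat \<Rightarrow> nat \<Rightarrow> 'n" where h1: "\<forall>i<n1. m1 i \<le> t"
     "\<forall>P\<in>grass k. f P = (\<Sum>i<n1. c1 i * (\<Prod>j<m1 i. P $ a1 i j $ b1 i j))"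
    and h2: "\<forall>i<n2. m2 i \<le> t"
     "\<forall>P\<in>grass k. g P = (\<Sum>i<n2. c2 i * (\<Prod>j<m2 i. P $ a2 i j $ b2 i j))" unfolding PolDeg_def by blast
  show ?thesis unfolding PolDeg_def
    apply (rule CollectI, rule exI[of _ "n1+n2"], rule exI[of _ "\<lambda>i. if i < n1 then c1 i else c2 (i - n1)"],
        rule exI[of _ "\<lambda>i. if i < n1 then m1 i else m2 (i - n1)"],
        rule exI[of _ "\<lambda>i. if i < n1 then a1 i else a2 (i - n1)"],
        rule exI[of _ "\<lambda>i. if i < n1 then b1 i else b2 (i - n1)"])
  proof (intro conjI ballI allI impI)
    fix i assume "i < n1 + n2"
    then show "(if i < n1 then m1 i else m2 (i - n1)) \<le> t"
      using h1 h2 by auto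
  next
    fix P :: "real^'n^'n" assume P: "P \<in> grass k"
    have "(\<Sum>i<n1 + n2. (if i < n1 then c1 i else c2 (i - n1)) *
           (\<Prod>j<(if i < n1 then m1 i else m2 (i - n1)). P $ (if i < n1 then a1 i else a2 (i - n1)) j $ (if i < n1 then b1 i else b2 (i - n1)) j))
        = (\<Sum>i<n1 + n2. (if i < n1 then c1 i * (\<Prod>j<m1 i. P $ a1 i j $ b1 i j) else c2 (i - n1) * (\<Prod>j<m2 (i-n1). P $ a2 (i-n1) j $ b2 (i-n1) j)))"
      by (rule sum.cong) auto
    also have "\<dots> = f P + g P" using sum_concat_if h1 h2 P by simp
    finally show "f P + g P = (\<Sum>i<n1 + n2. (if i < n1 then c1 i else c2 (i - n1)) *
           (\<Prod>j<(if i < n1 then m1 i else m2 (i - n1)). P $ (if i < n1 then a1 i else a2 (i - n1)) j $ (if i < n1 then b1 i else b2 (i - n1)) j))" by simp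
  qed
qed

lemma PolDeg_sum: "finite A \<Longrightarrow> (\<And>x. x \<in> A \<Longrightarrow> f x \<in> PolDeg t k) \<Longrightarrow> (\<lambda>P. \<Sum>x\<in>A. f x P) \<in> PolDeg t k"
proof (induction A rule: finite_induct)
  case empty then show ?case using PolDeg_0 by simp
next
  case (insert x F) then show ?case using PolDeg_add[of "f x" t k "\<lambda>P. \<Sum>x\<in>F. f x P"] by simp
qed


lemma mat_inner_sum_pairs:
  fixes M P :: "real^'n^'n"
  shows "mat_inner M P = (\<Sum>e\<in>UNIV. M $ fst e $ snd e * P $ snd e $ fst e)"
proof -
  have "mat_inner M P = (\<Sum>i\<in>UNIV. \<Sum>j\<in>UNIV. M $ i $ j * P $ j $ i)"
    unfolding mat_inner_def trace_def matrix_matrix_mult_def by simp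
  also have "\<dots> = (\<Sum>e\<in>UNIV \<times> UNIV. M $ fst e $ snd e * P $ snd e $ fst e)"
    unfolding sum.cartesian_product by (rule sum.cong) auto
  finally show ?thesis by (simp add: UNIV_Times_UNIV)
qed

lemma power_sum_PiE:
  fixes g :: "'e \<Rightarrow> real"
  assumes "finite E"
  shows "(\<Sum>e\<in>E. g e) ^ s = (\<Sum>f\<in>PiE {..<s} (\<lambda>_. E). \<Prod>j<s. g (f j))"
proof -
  have "(\<Sum>e\<in>E. g e) ^ s = (\<Prod>j<s. \<Sum>e\<in>E. g e)" by simp
  also have "\<dots> = (\<Sum>f\<in>PiE {..<s} (\<lambda>_. E). \<Prod>j<s. g (f j))"
    by (rule prod_sum_PiE) (use assms in auto)
  finally show ?thesis .
qed

lemma PolDeg_inner_power: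
  fixes M :: "real^'n^'n"
  assumes "s \<le> t"
  shows "(\<lambda>P. mat_inner M P ^ s) \<in> PolDeg t k"
proof -
  let ?D = "PiE {..<s} (\<lambda>_. (UNIV :: ('n\<times>'n) set))"
  have eq: "mat_inner M P ^ s = (\<Sum>f\<in>?D. (\<Prod>j<s. M $ fst (f j) $ snd (f j)) * (\<Prod>j<s. P $ snd (f j) $ fst (f j)))"
    for P :: "real^'n^'n"
    unfolding mat_inner_sum_pairs power_sum_PiE[OF finite]
    by (simp add: prod.distrib)
  have "(\<lambda>P. \<Sum>f\<in>?D. (\<Prod>j<s. M $ fst (f j) $ snd (f j)) * (\<Prod>j<s. P $ snd (f j) $ fst (f j))) \<in> PolDeg t k"
    by (rule PolDeg_sum) (auto intro!: PolDeg_scale PolDeg_basic assms finite_PiE)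
  then show ?thesis by (rule PolDeg_cong) (simp add: eq)
qed

lemma PolRank_sub_PolDeg: "(PolRank l t k :: (real^'n^'n \<Rightarrow> real) set) \<subseteq> PolDeg t k"
proof
  fix f :: "real^'n^'n \<Rightarrow> real" assume "f \<in> PolRank l t k"
  then obtain n c s and M :: "nat \<Rightarrow> real^'n^'n" where h: "\<forall>i<n. sym_mat (M i) \<and> rank (M i) \<le> l \<and> s i \<le> t"
     "\<forall>P\<in>grass k. f P = (\<Sum>i<n. c i * (mat_inner (M i) P) ^ s i)" unfolding PolRank_def by blast
  have "(\<lambda>P. \<Sum>i<n. c i * (mat_inner (M i) P) ^ s i) \<in> PolDeg t k"
    by (rule PolDeg_sum) (use h in \<open>auto intro!: PolDeg_scale PolDeg_inner_power\<close>)
  then show "f \<in> PolDeg t k" by (rule PolDeg_cong) (use h in auto)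
qed



definition pol :: "(nat \<Rightarrow> real) \<Rightarrow> nat \<Rightarrow> nat \<Rightarrow> real \<Rightarrow> real" where
 "pol y m p c = (\<Sum>S\<in>Pow {..<m}. (-1)^(m - card S) * (c + (\<Sum>j\<in>S. y j))^p)"

lemma pol_Suc: "pol y (Suc m) p c = pol y m p (c + y m) - pol y m p c"
proof -
  have P: "Pow {..<Suc m} = Pow {..<m} \<union> insert m ` Pow {..<m}"
    by (simp add: lessThan_Suc Pow_insert)
  have disj: "Pow {..<m} \<inter> insert m ` Pow {..<m} = {}" by auto
  have inj: "inj_on (insert m) (Pow {..<m})"
    unfolding inj_on_def by (metis PowD insert_ident lessThan_iff less_irrefl subset_eq)
  let ?F = "\<lambda>S. (-1::real)^(Suc m - card S) * (c + (\<Sum>j\<in>S. y j))^p"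
  have "pol y (Suc m) p c = sum ?F (Pow {..<m}) + sum ?F (insert m ` Pow {..<m})"
    unfolding pol_def P by (rule sum.union_disjoint) (auto simp: disj)
  also have "sum ?F (Pow {..<m}) = - pol y m p c"
    unfolding pol_def sum_negf[symmetric]
  proof (rule sum.cong)
    fix S assume "S \<in> Pow {..<m}"
    then have "card S \<le> m" by (metis PowD card_lessThan card_mono finite_lessThan)
    then have "Suc m - card S = Suc (m - card S)" by simp
    then show "?F S = - ((-1)^(m - card S) * (c + (\<Sum>j\<in>S. y j))^p)" by simp
  qed simp
  also have "sum ?F (insert m ` Pow {..<m}) = sum (?F \<circ> insert m) (Pow {..<m})"
    by (rule sum.reindex[OF inj])
  also have "\<dots> = pol y m p (c + y m)"
    unfolding pol_def
  proof (rule sum.cong)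
    fix S assume S: "S \<in> Pow {..<m}"
    then have fin: "finite S" by (meson PowD finite_lessThan finite_subset)
    have nm: "m \<notin> S" using S by auto
    have "card (insert m S) = Suc (card S)" using fin nm by simp
    moreover have "(\<Sum>j\<in>insert m S. y j) = y m + (\<Sum>j\<in>S. y j)" using fin nm by simp
    ultimately show "(?F \<circ> insert m) S = (-1)^(m - card S) * (c + y m + (\<Sum>j\<in>S. y j))^p"
      by (simp add: add.assoc)
  qed simp
  finally show ?thesis by simp
qed

lemma pol_binom: "pol y m p (c + a) - pol y m p c = (\<Sum>i<p. of_nat (p choose i) * a^(p-i) * pol y m i c)"
proof -
  have key: "(c + a + s)^p - (c + s)^p = (\<Sum>i<p. of_nat (p choose i) * a^(p-i) * (c+s)^i)" for s :: real
  proof -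
    have "(c + a + s)^p = ((c+s) + a)^p" by (simp add: algebra_simps)
    also have "\<dots> = (\<Sum>i\<le>p. of_nat (p choose i) * (c+s)^i * a^(p-i))" by (rule binomial_ring)
    also have "\<dots> = (\<Sum>i<p. of_nat (p choose i) * (c+s)^i * a^(p-i)) + (c+s)^p"
      by (simp add: lessThan_Suc_atMost[symmetric])
    finally show ?thesis by (simp add: algebra_simps)
  qed
  have "pol y m p (c + a) - pol y m p c =
     (\<Sum>S\<in>Pow {..<m}. (-1)^(m - card S) * ((c + a + (\<Sum>j\<in>S. y j))^p - (c + (\<Sum>j\<in>S. y j))^p))"
    unfolding pol_def sum_subtractf[symmetric] by (simp add: algebra_simps)
  also have "\<dots> = (\<Sum>S\<in>Pow {..<m}. \<Sum>i<p. (-1)^(m - card S) * (of_nat (p choose i) * a^(p-i) * (c + (\<Sum>j\<in>S. y j))^i))"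
    by (simp add: key sum_distrib_left)
  also have "\<dots> = (\<Sum>i<p. \<Sum>S\<in>Pow {..<m}. (-1)^(m - card S) * (of_nat (p choose i) * a^(p-i) * (c + (\<Sum>j\<in>S. y j))^i))"
    by (rule sum.swap)
  also have "\<dots> = (\<Sum>i<p. of_nat (p choose i) * a^(p-i) * pol y m i c)"
    unfolding pol_def by (simp add: sum_distrib_left algebra_simps)
  finally show ?thesis .
qed

lemma pol_main: "(p < m \<longrightarrow> pol y m p c = 0) \<and> pol y m m c = fact m * (\<Prod>j<m. y j)"
proof (induction m arbitrary: p c)
  case 0
  then show ?case by (simp add: pol_def)
next
  case (Suc m)
  have rec: "pol y (Suc m) q c = (\<Sum>i<q. of_nat (q choose i) * (y m)^(q-i) * pol y m i c)" for q
    using pol_Suc pol_binom by simp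
  have A: "pol y (Suc m) p c = 0" if "p < Suc m"
    unfolding rec by (rule sum.neutral) (use Suc.IH that in auto)
  have "pol y (Suc m) (Suc m) c = (\<Sum>i<m. of_nat (Suc m choose i) * (y m)^(Suc m-i) * pol y m i c)
          + of_nat (Suc m choose m) * (y m)^(Suc m - m) * pol y m m c"
    unfolding rec by simp
  also have "(\<Sum>i<m. of_nat (Suc m choose i) * (y m)^(Suc m-i) * pol y m i c) = 0"
    by (rule sum.neutral) (use Suc.IH in auto)
  also have "pol y m m c = fact m * (\<Prod>j<m. y j)" using Suc.IH by blast
  finally have "pol y (Suc m) (Suc m) c = fact (Suc m) * (\<Prod>j<Suc m. y j)"
    by (simp add: algebra_simps)
  with A show ?case by blast
qed

lemma polarization:
  fixes y :: "nat \<Rightarrow> real"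
  shows "(\<Prod>j<m. y j) = (\<Sum>S\<in>Pow {..<m}. ((-1)^(m - card S) / fact m) * (\<Sum>j\<in>S. y j)^m)"
proof -
  have "pol y m m 0 = fact m * (\<Prod>j<m. y j)" using pol_main by blast
  then have "(\<Prod>j<m. y j) = pol y m m 0 / fact m" by simp
  also have "\<dots> = (\<Sum>S\<in>Pow {..<m}. ((-1)^(m - card S) / fact m) * (\<Sum>j\<in>S. y j)^m)"
    unfolding pol_def sum_divide_distrib by simp
  finally show ?thesis .
qed



definition outer :: "real^'n \<Rightarrow> real^'n^'n" where
  "outer u = (\<chi> i j. u$i * u$j)"

lemma outer_sum_sym: "sym_mat (\<Sum>j\<in>S. outer (u j))"
  unfolding sym_mat_def transpose_def outer_def by (simp add: vec_eq_iff mult.commute)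

lemma outer_sum_mulv: "(\<Sum>j\<in>S. outer (u j)) *v x = (\<Sum>j\<in>S. (inner (u j) x) *\<^sub>R u j)"
proof -
  have "((\<Sum>j\<in>S. outer (u j)) *v x) $ k = (\<Sum>j\<in>S. (inner (u j) x) *\<^sub>R u j) $ k" for k
  proof -
    have "((\<Sum>j\<in>S. outer (u j)) *v x) $ k = (\<Sum>i\<in>UNIV. \<Sum>j\<in>S. u j $ k * u j $ i * x $ i)"
      unfolding outer_def matrix_vector_mult_def by (simp add: sum_distrib_right)
    also have "\<dots> = (\<Sum>j\<in>S. \<Sum>i\<in>UNIV. u j $ k * u j $ i * x $ i)"
      by (rule sum.swap)
    also have "\<dots> = (\<Sum>j\<in>S. (inner (u j) x) *\<^sub>R u j) $ k"
      unfolding inner_vec_def by (simp add: sum_distrib_left mult_ac)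
    finally show ?thesis .
  qed
  then show ?thesis by (simp add: vec_eq_iff)
qed

lemma outer_sum_rank: "finite S \<Longrightarrow> rank (\<Sum>j\<in>S. outer (u j)) \<le> card S"
proof -
  assume fin: "finite S"
  have "range (\<lambda>x. (\<Sum>j\<in>S. outer (u j)) *v x) \<subseteq> span (u ` S)"
  proof
    fix z assume "z \<in> range (\<lambda>x. (\<Sum>j\<in>S. outer (u j)) *v x)"
    then obtain x where "z = (\<Sum>j\<in>S. (inner (u j) x) *\<^sub>R u j)" using outer_sum_mulv by auto
    then show "z \<in> span (u ` S)"
      by (meson imageI span_base span_scale span_sum)
  qed
  then have "rank (\<Sum>j\<in>S. outer (u j)) \<le> card (u ` S)"
    unfolding rank_dim_range using fin by (intro dim_le_card) auto
  also have "\<dots> \<le> card S" using fin by (rule card_image_le)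
  finally show ?thesis .
qed

lemma mat_inner_sum_left: "mat_inner (\<Sum>j\<in>S. M j) P = (\<Sum>j\<in>S. mat_inner (M j) P)"
proof -
  have "mat_inner (\<Sum>j\<in>S. M j) P = (\<Sum>i\<in>UNIV. \<Sum>k\<in>UNIV. \<Sum>j\<in>S. M j $ i $ k * P $ k $ i)"
    unfolding mat_inner_def trace_def matrix_matrix_mult_def by (simp add: sum_distrib_right)
  also have "\<dots> = (\<Sum>i\<in>UNIV. \<Sum>j\<in>S. \<Sum>k\<in>UNIV. M j $ i $ k * P $ k $ i)"
    by (rule sum.cong[OF refl], rule sum.swap)
  also have "\<dots> = (\<Sum>j\<in>S. \<Sum>i\<in>UNIV. \<Sum>k\<in>UNIV. M j $ i $ k * P $ k $ i)"
    by (rule sum.swap)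
  also have "\<dots> = (\<Sum>j\<in>S. mat_inner (M j) P)"
    unfolding mat_inner_def trace_def matrix_matrix_mult_def by simp
  finally show ?thesis .
qed

definition bil :: "real^'n^'n \<Rightarrow> real^'n \<Rightarrow> real^'n \<Rightarrow> real" where
  "bil P u v = (\<Sum>i\<in>UNIV. \<Sum>j\<in>UNIV. u$i * v$j * P$j$i)"

lemma mat_inner_outer: "mat_inner (outer u) P = bil P u u"
  unfolding mat_inner_def trace_def matrix_matrix_mult_def outer_def bil_def
  by (simp add: mult.assoc)

lemma bil_add_l: "bil P (u+v) w = bil P u w + bil P v w"
  unfolding bil_def by (simp add: distrib_right sum.distrib)
lemma bil_add_r: "bil P w (u+v) = bil P w u + bil P w v"
  unfolding bil_def by (simp add: distrib_left distrib_right sum.distrib)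
lemma bil_diff_l: "bil P (u-v) w = bil P u w - bil P v w"
  unfolding bil_def by (simp add: left_diff_distrib sum_subtractf)
lemma bil_diff_r: "bil P w (u-v) = bil P w u - bil P w v"
  unfolding bil_def by (simp add: right_diff_distrib left_diff_distrib sum_subtractf)

lemma bil_axis: "bil P (axis a 1) (axis b 1) = P $ b $ a"
proof -
  have inner_eq: "(\<Sum>j\<in>UNIV. axis a 1 $ i * axis b 1 $ j * P $ j $ i) = (if i = a then P $ b $ i else 0)" for i
  proof -
    have "(\<Sum>j\<in>UNIV. axis a 1 $ i * axis b 1 $ j * P $ j $ i) = (\<Sum>j\<in>UNIV. if j = b then axis a 1 $ i * P $ j $ i else 0)"
      by (rule sum.cong) (auto simp: axis_def)
    also have "\<dots> = axis a 1 $ i * P $ b $ i" by (simp add: sum.delta')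
    finally show ?thesis by (simp add: axis_def)
  qed
  have "bil P (axis a 1) (axis b 1) = (\<Sum>i\<in>UNIV. if i = a then P $ b $ i else 0)"
    unfolding bil_def inner_eq ..
  also have "\<dots> = P $ b $ a" by (simp add: sum.delta')
  finally show ?thesis .
qed

lemma entry_polar:
  assumes "sym_mat P"
  shows "P $ a $ b = (1/4) * mat_inner (outer (axis a 1 + axis b 1)) P - (1/4) * mat_inner (outer (axis a 1 - axis b 1)) P"
proof -
  have sym: "P $ i $ j = P $ j $ i" for i j using assms unfolding sym_mat_def transpose_def
    by (metis vec_lambda_beta)
  have e: "bil P (u + v) (u + v) - bil P (u - v) (u - v) = 2 * bil P u v + 2 * bil P v u" for u v
    by (simp add: bil_add_l bil_add_r bil_diff_l bil_diff_r)
  show ?thesis unfolding mat_inner_outer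
    using e[of "axis a 1" "axis b 1"] bil_axis[of P a b] bil_axis[of P b a] sym[of a b] by simp
qed

lemma prod_outer_PolRank:
  fixes v :: "nat \<Rightarrow> real^'n::finite"
  assumes "m \<le> t" "m \<le> l"
  shows "(\<lambda>P::real^'n^'n. \<Prod>j<m. mat_inner (outer (v j)) P) \<in> PolRank l t k"
proof -
  have eq: "(\<Prod>j<m. mat_inner (outer (v j)) P) =
     (\<Sum>S\<in>Pow {..<m}. ((-1)^(m - card S) / fact m) * (mat_inner (\<Sum>j\<in>S. outer (v j)) P)^m)" for P :: "real^'n^'n"
    unfolding polarization[of "\<lambda>j. mat_inner (outer (v j)) P" m] mat_inner_sum_left ..
  have "(\<lambda>P::real^'n^'n. \<Sum>S\<in>Pow {..<m}. ((-1)^(m - card S) / fact m) * (mat_inner (\<Sum>j\<in>S. outer (v j)) P)^m) \<in> PolRank l t k"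
  proof (rule PolRank_sum)
    fix S assume S: "S \<in> Pow {..<m}"
    then have fin: "finite S" by (meson PowD finite_lessThan finite_subset)
    have "card S \<le> m" using S by (metis PowD card_lessThan card_mono finite_lessThan)
    then have "rank (\<Sum>j\<in>S. outer (v j)) \<le> l" using outer_sum_rank[OF fin, of v] assms by linarith
    then show "(\<lambda>P. ((-1)^(m - card S) / fact m) * (mat_inner (\<Sum>j\<in>S. outer (v j)) P)^m) \<in> PolRank l t k"
      by (intro PolRank_scale PolRank_basic outer_sum_sym assms)
  qed simp
  then show ?thesis by (rule PolRank_cong) (simp add: eq)
qed

lemma mono_PolRank_case1:
  fixes a b :: "nat \<Rightarrow> 'n::finite"
  assumes "m \<le> t" "m \<le> l"
  shows "(\<lambda>P::real^'n^'n. \<Prod>j<m. P $ a j $ b j) \<in> PolRank l t k"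
proof -
  define w :: "nat \<Rightarrow> bool \<Rightarrow> real^'n" where
    "w j s = (if s then axis (a j) 1 + axis (b j) 1 else axis (a j) 1 - axis (b j) 1)" for j s
  define cf :: "bool \<Rightarrow> real" where "cf s = (if s then 1/4 else -1/4)" for s
  let ?D = "PiE {..<m} (\<lambda>_. (UNIV::bool set))"
  have eq: "(\<Prod>j<m. P $ a j $ b j) = (\<Sum>\<sigma>\<in>?D. (\<Prod>j<m. cf (\<sigma> j)) * (\<Prod>j<m. mat_inner (outer (w j (\<sigma> j))) P))"
    if P: "P \<in> grass k" for P :: "real^'n^'n"
  proof -
    have sym: "sym_mat P" using P unfolding grass_def by auto
    have "(\<Prod>j<m. P $ a j $ b j) = (\<Prod>j<m. \<Sum>s\<in>UNIV. cf s * mat_inner (outer (w j s)) P)"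
      by (rule prod.cong[OF refl]) (simp add: UNIV_bool cf_def w_def entry_polar[OF sym])
    also have "\<dots> = (\<Sum>\<sigma>\<in>?D. \<Prod>j<m. cf (\<sigma> j) * mat_inner (outer (w j (\<sigma> j))) P)"
      by (rule prod_sum_PiE) auto
    finally show ?thesis by (simp add: prod.distrib)
  qed
  have "(\<lambda>P::real^'n^'n. \<Sum>\<sigma>\<in>?D. (\<Prod>j<m. cf (\<sigma> j)) * (\<Prod>j<m. mat_inner (outer (w j (\<sigma> j))) P)) \<in> PolRank l t k"
    by (rule PolRank_sum) (auto intro!: PolRank_scale prod_outer_PolRank assms finite_PiE)
  then show ?thesis by (rule PolRank_cong) (simp add: eq)
qed



lemma rank_proj:
  fixes P :: "real^'n^'n"
  assumes "P \<in> grass k"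
  shows "rank P = k"
proof -
  have sym: "transpose P = P" and idem: "P ** P = P" and tr: "trace P = real k"
    using assms unfolding grass_def sym_mat_def by auto
  let ?S = "range ((*v) P)"
  have sub: "subspace ?S"
    by (rule linear_subspace_image[OF matrix_vector_mul_linear subspace_UNIV])
  obtain B where B: "B \<subseteq> ?S" "pairwise orthogonal B" "\<And>x. x \<in> B \<Longrightarrow> norm x = 1"
    "independent B" "card B = dim ?S" "span B = ?S"
    using orthonormal_basis_subspace[OF sub] by blast
  have fin: "finite B" using B(4) by (rule independent_imp_finite)
  have rk: "rank P = card B" using B(5) by (simp add: rank_dim_range)
  have fix_w: "P *v w = w" if wB: "w \<in> B" for w
  proof -
    obtain z where "w = P *v z" using B(1) wB by blast
    then show ?thesis using idem by (metis matrix_vector_mul_assoc)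
  qed
  have expand: "P *v x = (\<Sum>w\<in>B. (x \<bullet> w) *\<^sub>R w)" for x
  proof -
    have "P *v x \<in> span B" using B(6) by auto
    then have "P *v x = (\<Sum>w\<in>B. ((P *v x) \<bullet> w) *\<^sub>R w)"
      using orthonormal_basis_expand[OF B(2) B(3) _ fin] by simp
    also have "\<dots> = (\<Sum>w\<in>B. (x \<bullet> w) *\<^sub>R w)"
    proof (rule sum.cong[OF refl])
      fix w assume w: "w \<in> B"
      have "(P *v x) \<bullet> w = w \<bullet> (P *v x)" by (simp add: inner_commute)
      also have "\<dots> = (w v* P) \<bullet> x" by (simp add: dot_lmul_matrix)
      also have "w v* P = transpose P *v w" by simp
      also have "\<dots> = w" using sym fix_w[OF w] by simp
      finally show "((P *v x) \<bullet> w) *\<^sub>R w = (x \<bullet> w) *\<^sub>R w" by (simp add: inner_commute)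
    qed
    finally show ?thesis .
  qed
  have "trace P = (\<Sum>i\<in>UNIV. (P *v axis i 1) $ i)"
    unfolding trace_def by (simp add: matrix_vector_mult_basis column_def)
  also have "\<dots> = (\<Sum>i\<in>UNIV. \<Sum>w\<in>B. w $ i * w $ i)"
    unfolding expand by (simp add: inner_axis inner_axis')
  also have "\<dots> = (\<Sum>w\<in>B. \<Sum>i\<in>UNIV. w $ i * w $ i)" by (rule sum.swap)
  also have "\<dots> = (\<Sum>w\<in>B. 1)"
  proof (rule sum.cong[OF refl])
    fix w assume "w \<in> B"
    then have "norm w ^ 2 = 1" using B(3) by simp
    then show "(\<Sum>i\<in>UNIV. w $ i * w $ i) = 1" by (simp add: power2_norm_eq_inner inner_vec_def)
  qed
  also have "\<dots> = real (card B)" by simp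
  finally show ?thesis using tr rk by simp
qed



definition ipD :: "'d set \<Rightarrow> ('d \<Rightarrow> real) \<Rightarrow> ('d \<Rightarrow> real) \<Rightarrow> real" where
  "ipD D u v = (\<Sum>e\<in>D. u e * v e)"

lemma ipD_diff_l: "ipD D (\<lambda>e. u e - v e) w = ipD D u w - ipD D v w"
  unfolding ipD_def by (simp add: left_diff_distrib sum_subtractf)
lemma ipD_add_l: "ipD D (\<lambda>e. u e + v e) w = ipD D u w + ipD D v w"
  unfolding ipD_def by (simp add: distrib_right sum.distrib)
lemma ipD_scale_l: "ipD D (\<lambda>e. c * u e) w = c * ipD D u w"
  unfolding ipD_def by (simp add: sum_distrib_left mult.assoc)
lemma ipD_sum_l: "ipD D (\<lambda>e. \<Sum>A\<in>S. f A e) w = (\<Sum>A\<in>S. ipD D (f A) w)"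
  unfolding ipD_def sum_distrib_right by (rule sum.swap)
lemma ipD_comm: "ipD D u v = ipD D v u"
  unfolding ipD_def by (simp add: mult.commute)
lemma ipD_cong: "(\<And>e. e \<in> D \<Longrightarrow> u e = u' e) \<Longrightarrow> (\<And>e. e \<in> D \<Longrightarrow> v e = v' e) \<Longrightarrow> ipD D u v = ipD D u' v'"
  unfolding ipD_def by (rule sum.cong) auto

lemma sum_insert_if:
  fixes g :: "'x \<Rightarrow> real"
  assumes "finite G0"
  shows "(\<Sum>A\<in>insert Y G0. ((if A = Y then lam else 0) + (if A \<in> G0 then f A else 0)) * g A) = lam * g Y + (\<Sum>A\<in>G0. f A * g A)"
proof -
  have fin: "finite (insert Y G0)" using assms by simp
  have 1: "(\<Sum>A\<in>insert Y G0. (if A = Y then lam else 0) * g A) = lam * g Y"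
  proof -
    have "(\<Sum>A\<in>insert Y G0. (if A = Y then lam else 0) * g A) = (\<Sum>A\<in>insert Y G0. (if A = Y then lam * g A else 0))"
      by (rule sum.cong) auto
    also have "\<dots> = lam * g Y" using fin by (simp add: sum.delta')
    finally show ?thesis .
  qed
  have 2: "(\<Sum>A\<in>insert Y G0. (if A \<in> G0 then f A else 0) * g A) = (\<Sum>A\<in>G0. f A * g A)"
  proof -
    have "(\<Sum>A\<in>insert Y G0. (if A \<in> G0 then f A else 0) * g A) = (\<Sum>A\<in>insert Y G0. (if A \<in> G0 then f A * g A else 0))"
      by (rule sum.cong) auto
    also have "\<dots> = (\<Sum>A\<in>insert Y G0 \<inter> G0. f A * g A)" using sum.inter_restrict[OF fin] by metis
    also have "insert Y G0 \<inter> G0 = G0" by auto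
    finally show ?thesis .
  qed
  show ?thesis using 1 2 by (simp add: distrib_right sum.distrib)
qed

lemma finite_spanning:
  fixes V :: "'x \<Rightarrow> 'd \<Rightarrow> real"
  assumes "finite D"
  shows "\<exists>G0 \<subseteq> G. finite G0 \<and> (\<forall>X\<in>G. \<exists>c. \<forall>e\<in>D. V X e = (\<Sum>A\<in>G0. c A * V A e))"
  using assms
proof (induction D rule: finite_induct)
  case empty
  then show ?case by auto
next
  case (insert d D)
  then obtain G0 where G0: "G0 \<subseteq> G" "finite G0" and sp: "\<forall>X\<in>G. \<exists>c. \<forall>e\<in>D. V X e = (\<Sum>A\<in>G0. c A * V A e)"
    by blast
  from sp obtain cc where cc: "\<And>X e. X \<in> G \<Longrightarrow> e \<in> D \<Longrightarrow> V X e = (\<Sum>A\<in>G0. cc X A * V A e)"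
    by metis
  define res where "res X = V X d - (\<Sum>A\<in>G0. cc X A * V A d)" for X
  show ?case
  proof (cases "\<forall>X\<in>G. res X = 0")
    case True
    show ?thesis
    proof (rule exI[of _ G0], intro conjI ballI)
      show "G0 \<subseteq> G" "finite G0" by (rule G0)+
      fix X assume X: "X \<in> G"
      show "\<exists>c. \<forall>e\<in>insert d D. V X e = (\<Sum>A\<in>G0. c A * V A e)"
        using cc[OF X] True X unfolding res_def by (intro exI[of _ "cc X"]) auto
    qed
  next
    case False
    then obtain Y where Y: "Y \<in> G" "res Y \<noteq> 0" by blast
    show ?thesis
    proof (rule exI[of _ "insert Y G0"], intro conjI ballI)
      show "insert Y G0 \<subseteq> G" using Y G0 by auto
      show "finite (insert Y G0)" using G0 by auto
      fix X assume X: "X \<in> G"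
      define lam where "lam = res X / res Y"
      define c where "c A = (if A = Y then lam else 0) + (if A \<in> G0 then cc X A - lam * cc Y A else 0)" for A
      have sumc: "(\<Sum>A\<in>insert Y G0. c A * V A e) = lam * V Y e + (\<Sum>A\<in>G0. cc X A * V A e) - lam * (\<Sum>A\<in>G0. cc Y A * V A e)" for e
        unfolding c_def sum_insert_if[OF G0(2)]
        by (simp add: left_diff_distrib sum_subtractf sum_distrib_left mult.assoc)
      show "\<exists>c. \<forall>e\<in>insert d D. V X e = (\<Sum>A\<in>insert Y G0. c A * V A e)"
      proof (intro exI[of _ c] ballI)
        fix e assume e: "e \<in> insert d D"
        show "V X e = (\<Sum>A\<in>insert Y G0. c A * V A e)"
        proof (cases "e = d")
          case True
          have "lam * res Y = res X" unfolding lam_def using Y(2) by simp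
          then show ?thesis unfolding sumc True res_def by (simp add: algebra_simps)
        next
          case False
          then have "e \<in> D" using e by simp
          then show ?thesis unfolding sumc using cc[OF X] cc[OF Y(1)] by simp
        qed
      qed
    qed
  qed
qed

lemma projection_exists:
  fixes V :: "'x \<Rightarrow> 'd \<Rightarrow> real"
  assumes "finite G0" "finite D"
  shows "\<exists>c. \<forall>B\<in>G0. ipD D (\<lambda>e. W e - (\<Sum>A\<in>G0. c A * V A e)) (V B) = 0"
  using assms(1)
proof (induction G0 arbitrary: W rule: finite_induct)
  case empty
  then show ?case by simp
next
  case (insert Y S)
  obtain c where c: "\<forall>B\<in>S. ipD D (\<lambda>e. W e - (\<Sum>A\<in>S. c A * V A e)) (V B) = 0"
    using insert.IH by blast
  obtain c' where c': "\<forall>B\<in>S. ipD D (\<lambda>e. V Y e - (\<Sum>A\<in>S. c' A * V A e)) (V B) = 0"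
    using insert.IH by blast
  define r where "r e = W e - (\<Sum>A\<in>S. c A * V A e)" for e
  define s where "s e = V Y e - (\<Sum>A\<in>S. c' A * V A e)" for e
  have rS: "ipD D r (V B) = 0" if "B \<in> S" for B using c that unfolding r_def by auto
  have sS: "ipD D s (V B) = 0" if "B \<in> S" for B using c' that unfolding s_def by auto
  have VY: "V Y e = s e + (\<Sum>A\<in>S. c' A * V A e)" for e unfolding s_def by simp
  have orth_span: "ipD D u (V Y) = ipD D u s" if "\<And>B. B \<in> S \<Longrightarrow> ipD D u (V B) = 0" for u
  proof -
    have "ipD D u (V Y) = ipD D (V Y) u" by (rule ipD_comm)
    also have "\<dots> = ipD D (\<lambda>e. s e + (\<Sum>A\<in>S. c' A * V A e)) u"
      by (rule ipD_cong) (auto simp: VY)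
    also have "\<dots> = ipD D s u + (\<Sum>A\<in>S. c' A * ipD D (V A) u)"
      by (simp add: ipD_add_l ipD_sum_l ipD_scale_l)
    also have "(\<Sum>A\<in>S. c' A * ipD D (V A) u) = 0"
    proof (rule sum.neutral, rule ballI)
      fix A assume A: "A \<in> S"
      have "ipD D (V A) u = ipD D u (V A)" by (rule ipD_comm)
      then show "c' A * ipD D (V A) u = 0" using that[OF A] by simp
    qed
    finally show ?thesis using ipD_comm[of D s u] by simp
  qed
  show ?case
  proof (cases "ipD D s s = 0")
    case True
    have s0: "s e = 0" if "e \<in> D" for e
    proof -
      have "(\<Sum>e\<in>D. s e * s e) = 0" using True unfolding ipD_def .
      then have "\<forall>e\<in>D. s e * s e = 0" using assms(2) by (subst (asm) sum_nonneg_eq_0_iff) auto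
      then show ?thesis using that by simp
    qed
    have "ipD D r s = 0" unfolding ipD_def using s0 by simp
    then have rY: "ipD D r (V Y) = 0" using orth_span[of r] rS by simp
    define c2 where "c2 A = (if A = Y then 0 else c A)" for A
    have eqs: "(\<Sum>A\<in>insert Y S. c2 A * V A e) = (\<Sum>A\<in>S. c A * V A e)" for e
    proof -
      have "(\<Sum>A\<in>S. c2 A * V A e) = (\<Sum>A\<in>S. c A * V A e)"
        by (rule sum.cong) (use insert.hyps in \<open>auto simp: c2_def\<close>)
      then show ?thesis using insert.hyps by (simp add: c2_def)
    qed
    show ?thesis
    proof (intro exI[of _ c2] ballI)
      fix B assume "B \<in> insert Y S"
      then show "ipD D (\<lambda>e. W e - (\<Sum>A\<in>insert Y S. c2 A * V A e)) (V B) = 0"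
        using rY rS unfolding eqs r_def by auto
    qed
  next
    case False
    define mu where "mu = ipD D r s / ipD D s s"
    define c2 where "c2 A = (if A = Y then mu else 0) + (if A \<in> S then c A - mu * c' A else 0)" for A
    have eqs: "(\<Sum>A\<in>insert Y S. c2 A * V A e) = mu * V Y e + (\<Sum>A\<in>S. c A * V A e) - mu * (\<Sum>A\<in>S. c' A * V A e)" for e
      unfolding c2_def sum_insert_if[OF insert.hyps(1)]
      by (simp add: left_diff_distrib sum_subtractf sum_distrib_left mult.assoc)
    have res: "W e - (\<Sum>A\<in>insert Y S. c2 A * V A e) = r e - mu * s e" for e
      unfolding eqs r_def s_def by (simp add: algebra_simps)
    have r2S: "ipD D (\<lambda>e. r e - mu * s e) (V B) = 0" if "B \<in> S" for B
      using rS[OF that] sS[OF that] by (simp add: ipD_diff_l ipD_scale_l)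
    have "ipD D (\<lambda>e. r e - mu * s e) s = ipD D r s - mu * ipD D s s"
      by (simp add: ipD_diff_l ipD_scale_l)
    also have "\<dots> = 0" unfolding mu_def using False by simp
    finally have r2Y: "ipD D (\<lambda>e. r e - mu * s e) (V Y) = 0"
      using orth_span[of "\<lambda>e. r e - mu * s e"] r2S by simp
    show ?thesis
    proof (intro exI[of _ c2] ballI)
      fix B assume "B \<in> insert Y S"
      then show "ipD D (\<lambda>e. W e - (\<Sum>A\<in>insert Y S. c2 A * V A e)) (V B) = 0"
        unfolding res using r2Y r2S by auto
    qed
  qed
qed

lemma duality:
  fixes V :: "'x \<Rightarrow> 'd \<Rightarrow> real"
  assumes "finite D"
  shows "\<exists>G0 c. G0 \<subseteq> G \<and> finite G0 \<and> (\<forall>X\<in>G. ipD D W (V X) = (\<Sum>A\<in>G0. c A * ipD D (V A) (V X)))"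
proof -
  obtain G0 where G0: "G0 \<subseteq> G" "finite G0" and sp: "\<forall>X\<in>G. \<exists>c. \<forall>e\<in>D. V X e = (\<Sum>A\<in>G0. c A * V A e)"
    using finite_spanning[OF assms, of G V] by blast
  obtain c where c: "\<forall>B\<in>G0. ipD D (\<lambda>e. W e - (\<Sum>A\<in>G0. c A * V A e)) (V B) = 0"
    using projection_exists[OF G0(2) assms] by blast
  define r where "r e = W e - (\<Sum>A\<in>G0. c A * V A e)" for e
  have "ipD D W (V X) = (\<Sum>A\<in>G0. c A * ipD D (V A) (V X))" if X: "X \<in> G" for X
  proof -
    obtain cx where cx: "\<forall>e\<in>D. V X e = (\<Sum>A\<in>G0. cx A * V A e)" using sp X by blast
    have "ipD D r (V X) = ipD D (\<lambda>e. \<Sum>A\<in>G0. cx A * V A e) r"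
      by (subst ipD_comm, rule ipD_cong) (use cx in auto)
    also have "\<dots> = (\<Sum>A\<in>G0. cx A * ipD D (V A) r)" by (simp add: ipD_sum_l ipD_scale_l)
    also have "\<dots> = 0"
    proof (rule sum.neutral, rule ballI)
      fix A assume A: "A \<in> G0"
      have "ipD D (V A) r = ipD D r (V A)" by (rule ipD_comm)
      then show "cx A * ipD D (V A) r = 0" using c A unfolding r_def by simp
    qed
    finally have r0: "ipD D r (V X) = 0" .
    have "ipD D W (V X) = ipD D (\<lambda>e. r e + (\<Sum>A\<in>G0. c A * V A e)) (V X)"
      by (rule ipD_cong) (auto simp: r_def)
    also have "\<dots> = (\<Sum>A\<in>G0. c A * ipD D (V A) (V X))"
      using r0 by (simp add: ipD_add_l ipD_sum_l ipD_scale_l)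
    finally show ?thesis .
  qed
  then show ?thesis using G0 by blast
qed



lemma sym_entry: "sym_mat X \<Longrightarrow> X $ i $ j = X $ j $ i"
  unfolding sym_mat_def transpose_def by (metis vec_lambda_beta)

lemma mono_PolRank_case2:
  fixes a b :: "nat \<Rightarrow> 'n::finite"
  assumes "m \<le> t" "k \<le> l" "1 \<le> k"
  shows "(\<lambda>P::real^'n^'n. \<Prod>j<m. P $ a j $ b j) \<in> PolRank l t k"
proof -
  let ?D = "PiE {..<t} (\<lambda>_. (UNIV :: ('n\<times>'n) set))"
  have finD: "finite ?D" by (rule finite_PiE) auto
  define V :: "real^'n^'n \<Rightarrow> (nat \<Rightarrow> 'n\<times>'n) \<Rightarrow> real" where
    "V X f = (\<Prod>j<t. X $ fst (f j) $ snd (f j))" for X f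
  define w :: "nat \<Rightarrow> 'n\<times>'n \<Rightarrow> real" where
    "w j e = (if j < m then (if e = (a j, b j) then 1 else 0) else (if fst e = snd e then 1 / real k else 0))" for j e
  define W where "W f = (\<Prod>j<t. w j (f j))" for f
  have lin: "(\<Sum>e\<in>UNIV. w j e * X $ fst e $ snd e) = (if j < m then X $ a j $ b j else 1)"
    if X: "X \<in> grass k" for X j
  proof (cases "j < m")
    case True
    have "(\<Sum>e\<in>UNIV. w j e * X $ fst e $ snd e) = (\<Sum>e\<in>UNIV. if e = (a j, b j) then X $ fst e $ snd e else 0)"
      by (rule sum.cong) (auto simp: w_def True)
    also have "\<dots> = X $ a j $ b j" by (simp add: sum.delta')
    finally show ?thesis using True by simp
  next
    case False
    have tr: "trace X = real k" using X unfolding grass_def by auto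
    have "(\<Sum>e\<in>UNIV. w j e * X $ fst e $ snd e) = (\<Sum>e\<in>UNIV. if fst e = snd e then X $ fst e $ snd e / real k else 0)"
      by (rule sum.cong) (auto simp: w_def False)
    also have "\<dots> = (\<Sum>e\<in>UNIV \<times> UNIV. if fst e = snd e then X $ fst e $ snd e / real k else 0)"
      by (simp only: UNIV_Times_UNIV)
    also have "\<dots> = (\<Sum>i\<in>UNIV. \<Sum>i'\<in>UNIV. if i = i' then X $ i $ i' / real k else 0)"
      unfolding sum.cartesian_product by (rule sum.cong) auto
    also have "\<dots> = (\<Sum>i\<in>UNIV. X $ i $ i / real k)"
      by (simp add: sum.delta)
    also have "\<dots> = trace X / real k" unfolding trace_def by (simp add: sum_divide_distrib)
    also have "\<dots> = 1" using tr assms(3) by simp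
    finally show ?thesis using False by simp
  qed
  have eq1: "(\<Prod>j<m. X $ a j $ b j) = ipD ?D W (V X)" if X: "X \<in> grass k" for X
  proof -
    have "(\<Prod>j<m. X $ a j $ b j) = (\<Prod>j<t. if j < m then X $ a j $ b j else 1)"
    proof -
      have "(\<Prod>j<m. X $ a j $ b j) = (\<Prod>j<m. if j < m then X $ a j $ b j else 1)" by simp
      also have "\<dots> = (\<Prod>j<t. if j < m then X $ a j $ b j else 1)"
        by (rule prod.mono_neutral_left) (use assms(1) in auto)
      finally show ?thesis .
    qed
    also have "\<dots> = (\<Prod>j<t. \<Sum>e\<in>UNIV. w j e * X $ fst e $ snd e)" using lin[OF X] by simp
    also have "\<dots> = (\<Sum>f\<in>?D. \<Prod>j<t. w j (f j) * X $ fst (f j) $ snd (f j))"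
      by (rule prod_sum_PiE) auto
    also have "\<dots> = ipD ?D W (V X)"
      unfolding ipD_def W_def V_def by (simp add: prod.distrib)
    finally show ?thesis .
  qed
  have eq2: "ipD ?D (V A) (V X) = mat_inner A X ^ t" if X: "X \<in> grass k" for A X
  proof -
    have symX: "sym_mat X" using X unfolding grass_def by auto
    have "ipD ?D (V A) (V X) = (\<Sum>f\<in>?D. \<Prod>j<t. A $ fst (f j) $ snd (f j) * X $ fst (f j) $ snd (f j))"
      unfolding ipD_def V_def by (simp add: prod.distrib)
    also have "\<dots> = (\<Sum>e\<in>UNIV. A $ fst e $ snd e * X $ fst e $ snd e) ^ t"
      by (rule power_sum_PiE[symmetric]) auto
    also have "(\<Sum>e\<in>UNIV. A $ fst e $ snd e * X $ fst e $ snd e) = mat_inner A X"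
      unfolding mat_inner_sum_pairs using sym_entry[OF symX] by simp
    finally show ?thesis .
  qed
  obtain G0 c where G0: "G0 \<subseteq> grass k" "finite G0"
    and dual: "\<forall>X\<in>grass k. ipD ?D W (V X) = (\<Sum>A\<in>G0. c A * ipD ?D (V A) (V X))"
    using duality[OF finD, of "grass k" W V] by blast
  have "(\<lambda>X::real^'n^'n. \<Sum>A\<in>G0. c A * mat_inner A X ^ t) \<in> PolRank l t k"
  proof (rule PolRank_sum[OF G0(2)])
    fix A assume A: "A \<in> G0"
    then have AG: "A \<in> grass k" using G0 by auto
    have "sym_mat A" using AG unfolding grass_def by auto
    moreover have "rank A \<le> l" using rank_proj[OF AG] assms(2) by simp
    ultimately show "(\<lambda>X. c A * mat_inner A X ^ t) \<in> PolRank l t k"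
      by (intro PolRank_scale PolRank_basic) auto
  qed
  then show ?thesis
  proof (rule PolRank_cong)
    fix X :: "real^'n^'n" assume X: "X \<in> grass k"
    show "(\<Prod>j<m. X $ a j $ b j) = (\<Sum>A\<in>G0. c A * mat_inner A X ^ t)"
      using eq1[OF X] dual X eq2[OF X] by simp
  qed
qed

theorem proposition5p1:
  fixes k l t :: nat
  assumes "1 \<le> k" and "k < CARD('n)" and "l < CARD('n)"
    and "l \<ge> min k t"
  shows "(PolRank l t k :: (real^'n^'n \<Rightarrow> real) set) = PolDeg t k"
proof
  show "(PolRank l t k :: (real^'n^'n \<Rightarrow> real) set) \<subseteq> PolDeg t k" by (rule PolRank_sub_PolDeg)
  show "PolDeg t k \<subseteq> (PolRank l t k :: (real^'n^'n \<Rightarrow> real) set)"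
  proof
    fix f :: "real^'n^'n \<Rightarrow> real" assume "f \<in> PolDeg t k"
    then obtain n cc m and a b :: "nat \<Rightarrow> nat \<Rightarrow> 'n" where h: "\<forall>i<n. m i \<le> t"
       "\<forall>P\<in>grass k. f P = (\<Sum>i<n. cc i * (\<Prod>j<m i. P $ a i j $ b i j))" unfolding PolDeg_def by blast
    have mono: "(\<lambda>P::real^'n^'n. \<Prod>j<m i. P $ a i j $ b i j) \<in> PolRank l t k" if i: "i < n" for i
    proof (cases "t \<le> l")
      case True
      then show ?thesis using h(1) i by (intro mono_PolRank_case1) auto
    next
      case False
      then have "k \<le> l" using assms(4) by simp
      then show ?thesis using h(1) i assms(1) by (intro mono_PolRank_case2) auto
    qed
    have "(\<lambda>P::real^'n^'n. \<Sum>i<n. cc i * (\<Prod>j<m i. P $ a i j $ b i j)) \<in> PolRank l t k"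
      by (rule PolRank_sum) (auto intro!: PolRank_scale mono)
    then show "f \<in> PolRank l t k" by (rule PolRank_cong) (use h in auto)
  qed
qed


end
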